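(* Let $t,m,r$ be positive integers with $r\geq 2$. If $r(3r-1)$ is not equal to $(mk^{2}-(m-2)k)t$ for any positive integer $k$, then there exists an integer $n$ with $2r-1\le n\le \frac{r(3r-1)}{2}$ such that $p_{mt,t}(n)$ is odd.
   Context: A partition $\lambda$ of a non-negative integer $n$ is a non-increasing sequence of positive integers (its parts) summing to $n$. For positive integers $A$ and $a$, $\mathrm{mex}_{A,a}(\lambda)$ denotes the smallest positive integer congruent to $a$ modulo $A$ that is not a part of $\lambda$. Then $p_{A,a}(n)$ denotes the number of partitions $\lambda$ of $n$ satisfying $\mathrm{mex}_{A,a}(\lambda)\equiv a \pmod{2A}$. *)

theory Defs
  imports Main
begin

definition partitions :: "nat \<Rightarrow> nat list set" where
  "partitions n = {xs. sorted (rev xs) \<and> (\<forall>x\<in>set xs. 0 < x) \<and> sum_list xs = n}"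

definition mex :: "nat \<Rightarrow> nat \<Rightarrow> nat list \<Rightarrow> nat" where
  "mex A a xs = (LEAST k. 0 < k \<and> k mod A = a mod A \<and> k \<notin> set xs)"

definition p_mex :: "nat \<Rightarrow> nat \<Rightarrow> nat \<Rightarrow> nat" where
  "p_mex A a n = card {xs \<in> partitions n. mex A a xs mod (2 * A) = a mod (2 * A)}"

end

theory Submission
  imports Defs "HOL-Library.Multiset" "HOL-Library.Z2"
begin

lemma inv_even:
  assumes "finite X" "\<And>x. x \<in> X \<Longrightarrow> h x \<in> X \<and> h (h x) = x \<and> h x \<noteq> x"
  shows "even (card X)"
  using assms
proof (induction X rule: finite_psubset_induct)
  case (psubset X)
  show ?case
  proof (cases "X = {}")
    case True then show ?thesis by simp
  next
    case False
    then obtain x where x: "x \<in> X" by blast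
    define Y where "Y = X - {x, h x}"
    have hx: "h x \<in> X" "h x \<noteq> x" using psubset.prems x by auto
    have "Y \<subset> X" using x Y_def by auto
    moreover have "\<And>y. y \<in> Y \<Longrightarrow> h y \<in> Y \<and> h (h y) = y \<and> h y \<noteq> y"
      using psubset.prems x unfolding Y_def by (metis Diff_iff insertCI insertE singletonD)
    ultimately have "even (card Y)" using psubset.IH by blast
    moreover have "card X = card Y + 2"
    proof -
      have "X = insert x (insert (h x) Y)" using x hx Y_def by auto
      moreover have "x \<notin> insert (h x) Y" using hx Y_def by auto
      moreover have "h x \<notin> Y" using Y_def by auto
      moreover have "finite Y" using psubset.hyps Y_def by auto
      ultimately show ?thesis by simp
    qed
    ultimately show ?thesis by simp
  qed
qed

lemma inv_parity:
  assumes "finite X" "\<And>x. x \<in> X \<Longrightarrow> h x \<in> X \<and> h (h x) = x"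
  shows "even (card X) \<longleftrightarrow> even (card {x\<in>X. h x = x})"
proof -
  let ?F = "{x\<in>X. h x = x}"
  have "even (card (X - ?F))"
    apply (rule inv_even[where h = h])
    using assms by auto
  moreover have "card X = card (X - ?F) + card ?F"
  proof -
    have "X = (X - ?F) \<union> ?F" by auto
    moreover have "finite ?F" "finite (X - ?F)" using assms(1) by auto
    ultimately show ?thesis using card_Un_disjoint[of "X - ?F" ?F] by auto
  qed
  ultimately show ?thesis by simp
qed

definition slope :: "nat set \<Rightarrow> nat" where
  "slope S = (LEAST j. Max S - j \<notin> S)"

definition exc :: "nat set \<Rightarrow> bool" where
  "exc S \<longleftrightarrow> S \<noteq> {} \<and> Min S = Max S + 1 - slope S \<and> (Min S = slope S \<or> Min S = slope S + 1)"

definition fr :: "nat set \<Rightarrow> nat set" where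
  "fr S = (if Min S \<le> slope S then insert (Max S + 1) (S - {Min S, Max S + 1 - Min S})
           else insert (slope S) (insert (Max S - slope S) (S - {Max S})))"

lemma slope_props:
  assumes "finite S" "S \<noteq> {}" "0 \<notin> S"
  shows "slope S \<le> Max S" "1 \<le> slope S" "Max S - slope S \<notin> S" "\<And>j. j < slope S \<Longrightarrow> Max S - j \<in> S"
proof -
  have ex: "Max S - Max S \<notin> S" using assms by simp
  show "Max S - slope S \<notin> S" unfolding slope_def by (rule LeastI[of _ "Max S"], rule ex)
  show "slope S \<le> Max S" unfolding slope_def by (rule Least_le, rule ex)
  show "\<And>j. j < slope S \<Longrightarrow> Max S - j \<in> S" unfolding slope_def using not_less_Least by blast
  have "Max S \<in> S" using assms by simp
  then show "1 \<le> slope S" using \<open>Max S - slope S \<notin> S\<close> by (cases "slope S") auto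
qed

lemma slope_eqI:
  assumes "\<And>j. j < d \<Longrightarrow> Max S - j \<in> S" "Max S - d \<notin> S"
  shows "slope S = d"
  unfolding slope_def
proof (rule Least_equality)
  show "Max S - d \<notin> S" by fact
  show "\<And>y. Max S - y \<notin> S \<Longrightarrow> d \<le> y" using assms(1) by (meson not_le)
qed

lemma fr1:
  assumes fin: "finite S" and z: "0 \<notin> S" and ne: "S \<noteq> {}" and c: "Min S \<le> slope S" and ne2: "\<not> exc S"
  defines "T \<equiv> insert (Max S + 1) (S - {Min S, Max S + 1 - Min S})"
  shows "fr S = T" "finite T" "0 \<notin> T" "T \<noteq> {}" "\<not> exc T" "fr T = S" "sum id T = sum id S" "T \<noteq> S"
proof -
  define M where "M = Max S"
  define s where "s = Min S"
  define d where "d = slope S"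
  have sp: "d \<le> M" "1 \<le> d" "M - d \<notin> S" "\<And>j. j < d \<Longrightarrow> M - j \<in> S"
    using slope_props[OF fin ne z] unfolding M_def d_def by auto
  have MS: "M \<in> S" "\<And>y. y \<in> S \<Longrightarrow> y \<le> M" using fin ne M_def by auto
  have sS: "s \<in> S" "\<And>y. y \<in> S \<Longrightarrow> s \<le> y" using fin ne s_def by auto
  have s1: "1 \<le> s" using sS z by (cases s) auto
  have c': "s \<le> d" using c s_def d_def by simp
  have ne2': "\<not> (s = M + 1 - d \<and> (s = d \<or> s = d + 1))" using ne2 ne unfolding exc_def s_def M_def d_def by auto
  have top: "M + 1 - d \<in> S" using sp(4)[of "d - 1"] sp(2) sp(1) by (simp add: Suc_diff_le)
  have lt: "s < M + 1 - s"
  proof (cases "s = M + 1 - d")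
    case True
    then have "s < d" using ne2' c' by auto
    then show ?thesis using True sp(1) by linarith
  next
    case False
    then have "s < M + 1 - d" using sS(2)[OF top] by simp
    then show ?thesis using c' by linarith
  qed
  have bS: "M + 1 - s \<in> S" using sp(4)[of "s - 1"] c' s1 by (simp add: Suc_diff_le)
  have M1: "M + 1 \<notin> S" using MS by fastforce
  have TT: "T = insert (M + 1) (S - {s, M + 1 - s})" unfolding T_def M_def s_def by simp
  show "fr S = T" unfolding fr_def T_def using c by simp
  show finT: "finite T" using fin TT by simp
  show "0 \<notin> T" using z TT by simp
  show "T \<noteq> {}" using TT by simp
  have MT: "Max T = M + 1"
  proof (rule Max_eqI[OF finT])
    show "y \<le> M + 1" if "y \<in> T" for y using that TT MS(2)[of y] by auto
  qed (use TT in auto)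
  have slT: "slope T = s"
  proof (rule slope_eqI)
    show "Max T - j \<in> T" if "j < s" for j
    proof (cases j)
      case 0 then show ?thesis using MT TT by simp
    next
      case (Suc i)
      then have "M - i \<in> S" using sp(4)[of i] that c' by simp
      moreover have "M - i \<noteq> s" "M - i \<noteq> M + 1 - s" using Suc that lt by auto
      ultimately show ?thesis using MT TT Suc by simp
    qed
    show "Max T - s \<notin> T" using MT TT s1 by auto
  qed
  have gt: "\<And>y. y \<in> T \<Longrightarrow> s < y" using TT sS(2) lt by fastforce
  have mT: "s < Min T" using gt finT \<open>T \<noteq> {}\<close> by simp
  show "\<not> exc T"
  proof
    assume "exc T"
    then have "Min T = Max T + 1 - slope T" "Min T = slope T \<or> Min T = slope T + 1"
      unfolding exc_def by auto
    then show False using MT slT mT lt by auto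
  qed
  have "\<not> Min T \<le> slope T" using mT slT by simp
  then have "fr T = insert s (insert (M + 1 - s) (T - {M + 1}))"
    unfolding fr_def using MT slT by simp
  also have "\<dots> = S" using TT M1 sS(1) bS by auto
  finally show "fr T = S" .
  have "sum id S = s + sum id (S - {s})" using fin sS(1) by (simp add: sum.remove)
  also have "sum id (S - {s}) = (M + 1 - s) + sum id (S - {s} - {M + 1 - s})"
    using fin bS lt by (subst sum.remove[of _ "M + 1 - s"]) auto
  finally have e1: "sum id S = s + (M + 1 - s) + sum id (S - {s, M + 1 - s})"
    by (simp add: Diff_insert2[symmetric] insert_commute)
  have "sum id T = (M + 1) + sum id (S - {s, M + 1 - s})" using TT fin M1 by simp
  then show "sum id T = sum id S" using e1 lt by simp
  show "T \<noteq> S" using TT M1 by auto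
qed

lemma fr2:
  assumes fin: "finite S" and z: "0 \<notin> S" and ne: "S \<noteq> {}" and c: "\<not> Min S \<le> slope S" and ne2: "\<not> exc S"
  defines "T \<equiv> insert (slope S) (insert (Max S - slope S) (S - {Max S}))"
  shows "fr S = T" "finite T" "0 \<notin> T" "T \<noteq> {}" "\<not> exc T" "fr T = S" "sum id T = sum id S" "T \<noteq> S"
proof -
  define M where "M = Max S"
  define s where "s = Min S"
  define d where "d = slope S"
  have sp: "d \<le> M" "1 \<le> d" "M - d \<notin> S" "\<And>j. j < d \<Longrightarrow> M - j \<in> S"
    using slope_props[OF fin ne z] unfolding M_def d_def by auto
  have MS: "M \<in> S" "\<And>y. y \<in> S \<Longrightarrow> y \<le> M" using fin ne M_def by auto
  have sS: "s \<in> S" "\<And>y. y \<in> S \<Longrightarrow> s \<le> y" using fin ne s_def by auto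
  have c': "d < s" using c s_def d_def by simp
  have ne2': "\<not> (s = M + 1 - d \<and> (s = d \<or> s = d + 1))" using ne2 ne unfolding exc_def s_def M_def d_def by auto
  have top: "M + 1 - d \<in> S" using sp(4)[of "d - 1"] sp(2) sp(1) by (simp add: Suc_diff_le)
  have lt: "d < M - d"
  proof (cases "s = M + 1 - d")
    case True
    then have "d + 1 < s" using ne2' c' by auto
    then show ?thesis using True sp(1) by linarith
  next
    case False
    then have "s < M + 1 - d" using sS(2)[OF top] by simp
    then show ?thesis using c' by linarith
  qed
  have dS: "d \<notin> S" using sS(2) c' by fastforce
  have TT: "T = insert d (insert (M - d) (S - {M}))" unfolding T_def M_def d_def by simp
  show "fr S = T" unfolding fr_def T_def using c by simp
  show finT: "finite T" using fin TT by simp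
  show "0 \<notin> T" using z TT sp(2) lt by auto
  show "T \<noteq> {}" using TT by simp
  have MT: "Max T = M - 1"
  proof (rule Max_eqI[OF finT])
    show "y \<le> M - 1" if "y \<in> T" for y
    proof -
      have "y \<in> S \<Longrightarrow> y \<noteq> M \<Longrightarrow> y \<le> M - 1" using MS(2)[of y] by linarith
      then show ?thesis using that TT lt sp by auto
    qed
    show "M - 1 \<in> T"
    proof (cases "d = 1")
      case True then show ?thesis using TT by simp
    next
      case False
      then have "M - 1 \<in> S" using sp(4)[of 1] sp(2) by simp
      moreover have "M - 1 \<noteq> M" using lt by simp
      ultimately show ?thesis using TT by simp
    qed
  qed
  have mT: "Min T = d"
  proof (rule Min_eqI[OF finT])
    show "d \<le> y" if "y \<in> T" for y using that TT sS(2)[of y] c' lt by auto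
  qed (use TT in auto)
  have inT: "Max T - j \<in> T" if "j < d" for j
  proof (cases "Suc j = d")
    case True then show ?thesis using MT TT lt by simp
  next
    case False
    then have "M - Suc j \<in> S" using sp(4)[of "Suc j"] that by simp
    moreover have "M - Suc j \<noteq> M" using lt by simp
    ultimately show ?thesis using MT TT by simp
  qed
  have slT: "d \<le> slope T"
  proof (rule ccontr)
    assume "\<not> d \<le> slope T"
    then have "Max T - slope T \<in> T" using inT by simp
    moreover have "Max T - slope T \<notin> T" using slope_props[OF finT \<open>T \<noteq> {}\<close> \<open>0 \<notin> T\<close>] by simp
    ultimately show False by simp
  qed
  show "\<not> exc T"
  proof
    assume "exc T"
    then have "Min T = Max T + 1 - slope T" "Min T = slope T \<or> Min T = slope T + 1"
      unfolding exc_def by auto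
    then show False using MT slT mT lt by auto
  qed
  have M1: "M - 1 + 1 = M" using lt by simp
  have "Min T \<le> slope T" using mT slT by simp
  then have "fr T = insert M (T - {d, M - d})"
    unfolding fr_def using MT mT M1 by simp
  also have "\<dots> = S" using TT MS(1) dS sp(3) lt by auto
  finally show "fr T = S" .
  have "sum id S = M + sum id (S - {M})" using fin MS(1) by (simp add: sum.remove)
  moreover have "sum id T = d + ((M - d) + sum id (S - {M}))" using TT fin dS sp(3) lt by simp
  ultimately show "sum id T = sum id S" using lt by simp
  show "T \<noteq> S" using TT dS by auto
qed

definition dparts :: "nat \<Rightarrow> nat set set" where
  "dparts k = {S. finite S \<and> 0 \<notin> S \<and> sum id S = k}"

definition gp :: "nat \<Rightarrow> bool" where
  "gp k \<longleftrightarrow> (\<exists>z::int. 2 * int k = z * (3 * z - 1))"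

definition ES :: "int \<Rightarrow> nat set" where
  "ES z = (if 0 \<le> z then {nat z..<2 * nat z} else {nat (-z) + 1..<2 * nat (-z) + 1})"

lemma finite_dparts: "finite (dparts k)"
proof (rule finite_subset)
  show "dparts k \<subseteq> Pow {0..k}"
  proof
    fix S assume "S \<in> dparts k"
    then have "finite S" "sum id S = k" unfolding dparts_def by auto
    then have "\<And>x. x \<in> S \<Longrightarrow> x \<le> k" using member_le_sum[of _ S id] by fastforce
    then show "S \<in> Pow {0..k}" by auto
  qed
qed simp

lemma sum_ico: "2 * sum id {a..<a + n} + n = n * (2 * a + (n::nat))"
  by (induction n) (auto simp: algebra_simps)

lemma pent_inj:
  fixes z w :: int
  assumes "z * (3 * z - 1) = w * (3 * w - 1)"
  shows "z = w"
proof -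
  have "(z - w) * (3 * (z + w) - 1) = 0" using assms by (simp add: algebra_simps)
  moreover have "3 * (z + w) - 1 \<noteq> 0" by presburger
  ultimately show ?thesis by simp
qed

lemma interval_props:
  assumes "1 \<le> a" "1 \<le> n"
  shows "Min {a..<a+n} = a" "Max {a..<a+n} = a + n - 1" "slope {a..<a+n} = n"
proof -
  show "Min {a..<a+n} = a" using assms by (intro Min_eqI) auto
  show M: "Max {a..<a+n} = a + n - 1" using assms by (intro Max_eqI) auto
  show "slope {a..<a+n} = n"
    by (rule slope_eqI) (use M assms in auto)
qed

lemma ES_fix:
  assumes "2 * int k = z * (3 * z - 1)"
  shows "ES z \<in> dparts k \<and> (ES z = {} \<or> exc (ES z))"
proof (cases "0 \<le> z")
  case True
  define n where "n = nat z"
  have E: "ES z = {n..<n+n}" using True unfolding ES_def n_def by (simp add: mult_2)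
  obtain K where K: "K = sum id (ES z)" by simp
  have s: "2 * K + n = n * (2 * n + n)" unfolding E K by (rule sum_ico)
  have zn: "z = int n" using True n_def by simp
  have "2 * int K + int n = int n * (2 * int n + int n)"
    using arg_cong[OF s, of int] by (simp only: of_nat_add of_nat_mult of_nat_numeral of_nat_1)
  then have "K = k" using assms zn by (simp add: algebra_simps)
  then have "sum id (ES z) = k" using K by simp
  moreover have "ES z = {} \<or> exc (ES z)"
  proof (cases "n = 0")
    case True then show ?thesis using E by simp
  next
    case False
    then have "1 \<le> n" by simp
    then show ?thesis unfolding exc_def E using interval_props[of n n] by auto
  qed
  moreover have "0 \<notin> ES z" using E by auto
  ultimately show ?thesis unfolding dparts_def using E by auto
next
  case False
  define n where "n = nat (-z)"
  have n1: "1 \<le> n" using False n_def by simp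
  have E: "ES z = {n+1..<(n+1)+n}" using False unfolding ES_def n_def by (simp add: mult_2)
  obtain K where K: "K = sum id (ES z)" by simp
  have s: "2 * K + n = n * (2 * (n+1) + n)" unfolding E K by (rule sum_ico)
  have zn: "z = - int n" using False n_def by simp
  have "2 * int K + int n = int n * (2 * (int n + 1) + int n)"
    using arg_cong[OF s, of int] by (simp only: of_nat_add of_nat_mult of_nat_numeral of_nat_1)
  then have "K = k" using assms zn by (simp add: algebra_simps)
  then have "sum id (ES z) = k" using K by simp
  moreover have "exc (ES z)"
    unfolding exc_def E using interval_props[of "n+1" n] n1 by auto
  moreover have "0 \<notin> ES z" using E by auto
  ultimately show ?thesis unfolding dparts_def using E by auto
qed

lemma fix_ES:
  assumes S: "S \<in> dparts k" and e: "exc S"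
  shows "\<exists>z. S = ES z \<and> 2 * int k = z * (3 * z - 1)"
proof -
  have fin: "finite S" and z: "0 \<notin> S" and sk: "sum id S = k" using S unfolding dparts_def by auto
  have ne: "S \<noteq> {}" using e unfolding exc_def by auto
  define M where "M = Max S"
  define s where "s = Min S"
  define d where "d = slope S"
  have sp: "d \<le> M" "1 \<le> d" "M - d \<notin> S" "\<And>j. j < d \<Longrightarrow> M - j \<in> S"
    using slope_props[OF fin ne z] unfolding M_def d_def by auto
  have MS: "\<And>y. y \<in> S \<Longrightarrow> y \<le> M" using fin ne M_def by auto
  have sS: "\<And>y. y \<in> S \<Longrightarrow> s \<le> y" using fin ne s_def by auto
  have e': "s = M + 1 - d" "s = d \<or> s = d + 1" using e unfolding exc_def s_def M_def d_def by auto
  have SI: "S = {s..<s+d}"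
  proof
    show "S \<subseteq> {s..<s+d}" using MS sS e'(1) sp(1) by fastforce
    show "{s..<s+d} \<subseteq> S"
    proof
      fix y assume "y \<in> {s..<s+d}"
      then have "M - (M - y) \<in> S" using sp(4)[of "M - y"] e'(1) sp(1) by auto
      moreover have "M - (M - y) = y" using \<open>y \<in> {s..<s+d}\<close> e'(1) sp(1) by auto
      ultimately show "y \<in> S" by simp
    qed
  qed
  have s2: "2 * k + d = d * (2 * s + d)" unfolding SI sk[symmetric] by (rule sum_ico)
  have s2': "2 * int k + int d = int d * (2 * int s + int d)"
    using arg_cong[OF s2, of int] by (simp only: of_nat_add of_nat_mult of_nat_numeral of_nat_1)
  from e'(2) show ?thesis
  proof
    assume sd: "s = d"
    have "S = ES (int d)" unfolding SI ES_def sd by (simp add: mult_2)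
    moreover have "2 * int k = int d * (3 * int d - 1)" using s2' sd by (simp add: algebra_simps)
    ultimately show ?thesis by blast
  next
    assume sd: "s = d + 1"
    have "S = ES (- int d)" unfolding SI ES_def sd using sp(2) by (simp add: mult_2)
    moreover have "2 * int k = (- int d) * (3 * (- int d) - 1)" using s2' sd by (simp add: algebra_simps)
    ultimately show ?thesis by blast
  qed
qed

lemma card_fix:
  "card {S \<in> dparts k. S = {} \<or> exc S} = (if gp k then 1 else 0)"
proof (cases "gp k")
  case True
  then obtain z where zk: "2 * int k = z * (3 * z - 1)" unfolding gp_def by blast
  have "{S \<in> dparts k. S = {} \<or> exc S} = {ES z}"
  proof
    show "{ES z} \<subseteq> {S \<in> dparts k. S = {} \<or> exc S}" using ES_fix[OF zk] by auto
    show "{S \<in> dparts k. S = {} \<or> exc S} \<subseteq> {ES z}"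
    proof
      fix S assume S: "S \<in> {S \<in> dparts k. S = {} \<or> exc S}"
      show "S \<in> {ES z}"
      proof (cases "S = {}")
        case True
        then have "k = 0" using S unfolding dparts_def by auto
        then have "z = 0" using pent_inj[of z 0] zk by simp
        then show ?thesis using True unfolding ES_def by simp
      next
        case False
        then obtain w where "S = ES w" "2 * int k = w * (3 * w - 1)" using fix_ES S by blast
        then show ?thesis using pent_inj[of z w] zk by simp
      qed
    qed
  qed
  then show ?thesis using True by simp
next
  case False
  have "{S \<in> dparts k. S = {} \<or> exc S} = {}"
  proof (rule ccontr)
    assume "{S \<in> dparts k. S = {} \<or> exc S} \<noteq> {}"
    then obtain S where S: "S \<in> dparts k" "S = {} \<or> exc S" by blast
    show False
    proof (cases "S = {}")
      case True
      then have "k = 0" using S unfolding dparts_def by auto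
      then show False using False unfolding gp_def by auto
    next
      case F: False
      then show False using fix_ES[of S k] S False unfolding gp_def by auto
    qed
  qed
  then show ?thesis using False by (simp only: card.empty if_False)
qed

lemma Q_parity: "odd (card (dparts k)) \<longleftrightarrow> gp k"
proof -
  define h where "h S = (if S = {} \<or> exc S then S else fr S)" for S
  have inv: "h S \<in> dparts k \<and> h (h S) = S" if "S \<in> dparts k" for S
  proof (cases "S = {} \<or> exc S")
    case True then show ?thesis using that h_def by simp
  next
    case False
    have fin: "finite S" "0 \<notin> S" "sum id S = k" using that unfolding dparts_def by auto
    have ne: "S \<noteq> {}" "\<not> exc S" using False by auto
    show ?thesis
    proof (cases "Min S \<le> slope S")
      case True
      note f = fr1[OF fin(1,2) ne(1) True ne(2)]
      show ?thesis unfolding h_def using f fin ne unfolding dparts_def by auto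
    next
      case c: False
      note f = fr2[OF fin(1,2) ne(1) c ne(2)]
      show ?thesis unfolding h_def using f fin ne unfolding dparts_def by auto
    qed
  qed
  have fx: "{S \<in> dparts k. h S = S} = {S \<in> dparts k. S = {} \<or> exc S}"
  proof -
    have "h S \<noteq> S" if "S \<in> dparts k" "\<not> (S = {} \<or> exc S)" for S
    proof -
      have fin: "finite S" "0 \<notin> S" using that unfolding dparts_def by auto
      show ?thesis
      proof (cases "Min S \<le> slope S")
        case True
        show ?thesis using fr1(1,8)[OF fin _ True] that h_def by auto
      next
        case False
        show ?thesis using fr2(1,8)[OF fin _ False] that h_def by auto
      qed
    qed
    then show ?thesis unfolding h_def by auto
  qed
  have "even (card (dparts k)) \<longleftrightarrow> even (card {S \<in> dparts k. h S = S})"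
    by (rule inv_parity[OF finite_dparts]) (use inv in auto)
  then show ?thesis using fx card_fix by simp
qed

definition mparts :: "nat \<Rightarrow> nat multiset set" where
  "mparts n = {L. 0 \<notin># L \<and> sum_mset L = n}"

lemma length_le_sum: "\<forall>x\<in>set xs. 0 < (x::nat) \<Longrightarrow> length xs \<le> sum_list xs"
  by (induction xs) auto

lemma finite_partitions: "finite (partitions n)"
proof (rule finite_subset)
  show "partitions n \<subseteq> {xs. set xs \<subseteq> {0..n} \<and> length xs \<le> n}"
  proof
    fix xs assume "xs \<in> partitions n"
    then have h: "\<forall>x\<in>set xs. 0 < x" "sum_list xs = n" unfolding partitions_def by auto
    then have "length xs \<le> n" using length_le_sum by metis
    moreover have "set xs \<subseteq> {0..n}" using h member_le_sum_list by fastforce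
    ultimately show "xs \<in> {xs. set xs \<subseteq> {0..n} \<and> length xs \<le> n}" by simp
  qed
  show "finite {xs. set xs \<subseteq> {0..n} \<and> length xs \<le> n}" by (rule finite_lists_length_le) simp
qed

lemma inj_mset_partitions: "inj_on mset (partitions n)"
proof
  fix xs ys assume xs: "xs \<in> partitions n" and ys: "ys \<in> partitions n" and e: "mset xs = mset ys"
  have "sort (rev xs) = rev ys"
    by (rule properties_for_sort) (use e ys partitions_def in auto)
  moreover have "sort (rev xs) = rev xs" using xs partitions_def sorted_sort_id by auto
  ultimately show "xs = ys" by simp
qed

lemma image_mset_partitions: "mset ` partitions n = mparts n"
proof
  show "mset ` partitions n \<subseteq> mparts n"
    unfolding partitions_def mparts_def by (auto simp: sum_mset_sum_list)
  show "mparts n \<subseteq> mset ` partitions n"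
  proof
    fix L assume L: "L \<in> mparts n"
    define xs where "xs = rev (sorted_list_of_multiset L)"
    have "mset xs = L" unfolding xs_def by simp
    moreover have "xs \<in> partitions n"
    proof -
      have "sum_list xs = sum_mset (mset xs)" by (simp add: sum_mset_sum_list)
      also have "\<dots> = n" using \<open>mset xs = L\<close> L unfolding mparts_def by simp
      finally have "sum_list xs = n" .
      moreover have "sorted (rev xs)" unfolding xs_def by simp
      moreover have "\<forall>x\<in>set xs. 0 < x"
      proof
        fix x assume "x \<in> set xs"
        then have "x \<in># L" unfolding xs_def by simp
        with L show "0 < x" unfolding mparts_def by (cases x) auto
      qed
      ultimately show ?thesis unfolding partitions_def by simp
    qed
    ultimately show "L \<in> mset ` partitions n" by blast
  qed
qed

lemma finite_mparts: "finite (mparts n)"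
  using finite_partitions image_mset_partitions by (metis finite_imageI)

lemma card_filter_partitions:
  "card {xs \<in> partitions n. P (mset xs)} = card {L \<in> mparts n. P L}"
proof -
  have "mset ` {xs \<in> partitions n. P (mset xs)} = {L \<in> mparts n. P L}"
  proof
    show "mset ` {xs \<in> partitions n. P (mset xs)} \<subseteq> {L \<in> mparts n. P L}"
      using image_mset_partitions by auto
    show "{L \<in> mparts n. P L} \<subseteq> mset ` {xs \<in> partitions n. P (mset xs)}"
    proof
      fix L assume L: "L \<in> {L \<in> mparts n. P L}"
      then obtain xs where "xs \<in> partitions n" "L = mset xs"
        using image_mset_partitions[of n] by (metis (no_types, lifting) imageE mem_Collect_eq)
      then show "L \<in> mset ` {xs \<in> partitions n. P (mset xs)}" using L by auto
    qed
  qed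
  moreover have "inj_on mset {xs \<in> partitions n. P (mset xs)}"
    using inj_mset_partitions by (rule inj_on_subset) auto
  ultimately show ?thesis by (metis card_image)
qed

definition pa :: "nat \<Rightarrow> nat" where "pa n = card (mparts n)"

lemma mparts0: "mparts 0 = {{#}}"
  unfolding mparts_def by (auto simp: sum_mset_0_iff) (metis all_not_in_conv set_mset_eq_empty_iff)

lemma pairs_even:
  assumes M1: "1 \<le> M"
  shows "even (\<Sum>i\<le>M. pa i * card (dparts (M - i)))"
proof -
  define X where "X = (\<Union>i\<in>{..M}. mparts i \<times> dparts (M - i))"
  have memX: "p \<in> X \<longleftrightarrow> 0 \<notin># fst p \<and> finite (snd p) \<and> 0 \<notin> snd p \<and> sum_mset (fst p) + sum id (snd p) = M" for p
    unfolding X_def mparts_def dparts_def by (cases p) force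
  have cardX: "card X = (\<Sum>i\<le>M. pa i * card (dparts (M - i)))"
    unfolding X_def pa_def
    by (subst card_UN_disjoint) (auto simp: finite_mparts[unfolded mparts_def] finite_dparts card_cartesian_product mparts_def)
  have finX: "finite X" unfolding X_def by (auto simp: finite_mparts finite_dparts)
  define mn where "mn p = Min (set_mset (fst p) \<union> snd p)" for p :: "nat multiset \<times> nat set"
  define h where "h p = (if mn p \<in> snd p then (add_mset (mn p) (fst p), snd p - {mn p})
      else (fst p - {#mn p#}, insert (mn p) (snd p)))" for p
  have props: "h p \<in> X \<and> h (h p) = p \<and> h p \<noteq> p" if pX: "p \<in> X" for p
  proof -
    obtain L S where p: "p = (L, S)" by (cases p)
    have L0: "0 \<notin># L" and finS: "finite S" and S0: "0 \<notin> S" and sm: "sum_mset L + sum id S = M"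
      using pX memX p by auto
    have ne: "set_mset L \<union> S \<noteq> {}" using sm M1 by auto
    have fin: "finite (set_mset L \<union> S)" using finS by simp
    define m where "m = Min (set_mset L \<union> S)"
    have hmn: "mn (L, S) = m" unfolding mn_def m_def by simp
    have mIn: "m \<in> set_mset L \<union> S" using m_def Min_in[OF fin ne] by simp
    show ?thesis unfolding p
    proof (cases "m \<in> S")
      case True
      have hp: "h (L, S) = (add_mset m L, S - {m})" unfolding h_def using hmn True by simp
      have m0: "0 < m" using True S0 by (cases m) auto
      have s1: "sum id S = m + sum id (S - {m})" using finS True by (simp add: sum.remove)
      have hX: "(add_mset m L, S - {m}) \<in> X" unfolding memX using L0 finS S0 sm s1 m0 by auto
      have seq: "set_mset (add_mset m L) \<union> (S - {m}) = set_mset L \<union> S" using True by auto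
      have "mn (add_mset m L, S - {m}) = m" unfolding mn_def fst_conv snd_conv seq m_def[symmetric] by (rule refl)
      then have "h (add_mset m L, S - {m}) = (add_mset m L - {#m#}, insert m (S - {m}))"
        unfolding h_def by simp
      also have "\<dots> = (L, S)" using True by auto
      finally show "h (L, S) \<in> X \<and> h (h (L, S)) = (L, S) \<and> h (L, S) \<noteq> (L, S)"
        using hX hp True by auto
    next
      case False
      then have mL: "m \<in># L" using mIn by simp
      then obtain L' where L': "L = add_mset m L'" by (metis multi_member_split)
      have "h (L, S) = (L - {#m#}, insert m S)" unfolding h_def using hmn False by simp
      then have hp: "h (L, S) = (L', insert m S)" using L' by simp
      have m0: "0 < m" using mL L0 by (cases m) auto
      have L0': "0 \<notin># L'" using L0 L' by simp
      have sm': "sum_mset L' + sum id (insert m S) = M" using sm L' False finS by simp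
      have hX: "(L', insert m S) \<in> X" unfolding memX using L0' finS S0 sm' m0 by auto
      have seq: "set_mset L' \<union> insert m S = set_mset L \<union> S" using L' by auto
      have "mn (L', insert m S) = m" unfolding mn_def fst_conv snd_conv seq m_def[symmetric] by (rule refl)
      then have "h (L', insert m S) = (add_mset m L', insert m S - {m})"
        unfolding h_def by simp
      also have "\<dots> = (L, S)" using False L' by simp
      finally show "h (L, S) \<in> X \<and> h (h (L, S)) = (L, S) \<and> h (L, S) \<noteq> (L, S)"
        using hX hp False by auto
    qed
  qed
  have "even (card X)" by (rule inv_even[OF finX, of h]) (use props in blast)
  then show ?thesis using cardX by simp
qed

lemma bit_of_nat: "(of_nat n :: bit) = (if even n then 0 else 1)"
  by (induction n) auto

lemma pa0: "pa 0 = 1" unfolding pa_def mparts0 by simp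

lemma gp0: "gp 0" unfolding gp_def by (rule exI[of _ 0]) simp

lemma euler2: "(\<Sum>g\<le>M. if gp g then (of_nat (pa (M - g)) :: bit) else 0) = (if M = 0 then 1 else 0)"
proof (cases "M = 0")
  case True then show ?thesis using pa0 gp0 by simp
next
  case False
  have "(of_nat (\<Sum>i\<le>M. pa i * card (dparts (M - i))) :: bit) = 0"
    using pairs_even[of M] False bit_of_nat by simp
  then have "(\<Sum>i\<le>M. (of_nat (pa i) :: bit) * of_nat (card (dparts (M - i)))) = 0"
    by simp
  moreover have qb: "(of_nat (card (dparts k)) :: bit) = (if gp k then 1 else 0)" for k
    using Q_parity[of k] bit_of_nat[of "card (dparts k)"] by auto
  have "(\<Sum>i\<le>M. (of_nat (pa i) :: bit) * of_nat (card (dparts (M - i))))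
      = (\<Sum>i\<le>M. if gp (M - i) then (of_nat (pa i) :: bit) else 0)"
  proof (rule sum.cong[OF refl])
    fix i show "(of_nat (pa i) :: bit) * of_nat (card (dparts (M - i))) = (if gp (M - i) then (of_nat (pa i) :: bit) else 0)"
      by (cases "gp (M - i)") (simp_all only: qb if_True if_False mult_1_right mult_zero_right)
  qed
  ultimately have e: "(\<Sum>i\<le>M. if gp (M - i) then (of_nat (pa i) :: bit) else 0) = 0"
    by simp
  have "(\<Sum>g\<le>M. if gp g then (of_nat (pa (M - g)) :: bit) else 0)
      = (\<Sum>i\<le>M. if gp (M - i) then (of_nat (pa (M - (M - i))) :: bit) else 0)"
    unfolding atMost_atLeast0 by (subst sum.atLeastAtMost_rev) (simp only: add_0_right)
  also have "\<dots> = (\<Sum>i\<le>M. if gp (M - i) then (of_nat (pa i) :: bit) else 0)"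
    by (rule sum.cong) auto
  finally show ?thesis using e False by simp
qed

definition idx :: "nat \<Rightarrow> nat \<Rightarrow> nat multiset \<Rightarrow> nat" where
  "idx t A L = (LEAST i. t + i * A \<notin># L)"

definition ee :: "nat \<Rightarrow> nat \<Rightarrow> nat \<Rightarrow> nat" where
  "ee t A j = (\<Sum>i<j. t + i * A)"

lemma mem_le_sum_mset: "x \<in># L \<Longrightarrow> x \<le> sum_mset (L :: nat multiset)"
proof -
  assume "x \<in># L"
  then obtain L' where "L = add_mset x L'" by (blast dest: multi_member_split)
  then show ?thesis by simp
qed

lemma not_in_big:
  assumes "L \<in> mparts n" "0 < t" "0 < A"
  shows "t + n * A \<notin># L"
proof
  assume "t + n * A \<in># L"
  then have "t + n * A \<le> n" using mem_le_sum_mset assms(1) unfolding mparts_def by fastforce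
  moreover have "n \<le> n * A" using assms(3) by simp
  ultimately show False using assms(2) by linarith
qed

lemma idx_props:
  assumes "L \<in> mparts n" "0 < t" "0 < A"
  shows "idx t A L \<le> n" "t + idx t A L * A \<notin># L"
    "\<And>j. (\<forall>i<j. t + i * A \<in># L) \<longleftrightarrow> j \<le> idx t A L"
proof -
  have ex: "t + n * A \<notin># L" by (rule not_in_big[OF assms])
  show "idx t A L \<le> n" unfolding idx_def by (rule Least_le) (rule ex)
  show nin: "t + idx t A L * A \<notin># L" unfolding idx_def by (rule LeastI) (rule ex)
  fix j
  show "(\<forall>i<j. t + i * A \<in># L) \<longleftrightarrow> j \<le> idx t A L"
  proof
    assume "\<forall>i<j. t + i * A \<in># L"
    show "j \<le> idx t A L"
    proof (rule ccontr)
      assume "\<not> j \<le> idx t A L"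
      then have "idx t A L < j" by simp
      with \<open>\<forall>i<j. t + i * A \<in># L\<close> nin show False by blast
    qed
  next
    assume "j \<le> idx t A L"
    show "\<forall>i<j. t + i * A \<in># L"
    proof (intro allI impI)
      fix i assume "i < j"
      then have "i < (LEAST i. t + i * A \<notin># L)" using \<open>j \<le> idx t A L\<close> unfolding idx_def by simp
      then have "\<not> (t + i * A \<notin># L)" by (rule not_less_Least)
      then show "t + i * A \<in># L" by simp
    qed
  qed
qed

lemma mod_char:
  fixes k t A :: nat
  assumes "0 < t" "t \<le> A"
  shows "(0 < k \<and> k mod A = t mod A) \<longleftrightarrow> (\<exists>i. k = t + i * A)"
proof
  assume h: "0 < k \<and> k mod A = t mod A"
  show "\<exists>i. k = t + i * A"
  proof (cases "t < A")
    case True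
    then have "k mod A = t" using h by simp
    then have "k = t + (k div A) * A" using div_mult_mod_eq[of k A] by linarith
    then show ?thesis by blast
  next
    case False
    then have tA: "t = A" using assms by simp
    then have "k mod A = 0" using h by simp
    then have k: "k = (k div A) * A" using div_mult_mod_eq[of k A] by linarith
    have "k div A \<noteq> 0"
    proof
      assume "k div A = 0"
      then have "k = 0" using k by simp
      with h show False by simp
    qed
    then obtain q where q: "k div A = Suc q" using not0_implies_Suc by blast
    then have "k = A + q * A" using k by simp
    then show ?thesis using tA by blast
  qed
next
  assume "\<exists>i. k = t + i * A"
  then show "0 < k \<and> k mod A = t mod A" using assms by auto
qed

lemma even_char:
  fixes t A i :: nat
  assumes "0 < A"
  shows "(t + i * A) mod (2 * A) = t mod (2 * A) \<longleftrightarrow> even i"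
proof -
  have "(t + i * A) mod (2 * A) = t mod (2 * A) \<longleftrightarrow> 2 * A dvd (t + i * A - t)"
    by (rule mod_eq_dvd_iff_nat) simp
  also have "\<dots> \<longleftrightarrow> 2 * A dvd i * A" by simp
  also have "\<dots> \<longleftrightarrow> 2 dvd i" using assms by simp
  finally show ?thesis .
qed

lemma mex_idx:
  assumes xs: "xs \<in> partitions n" and t: "0 < t" and m: "0 < m"
  shows "mex (m * t) t xs = t + idx t (m * t) (mset xs) * (m * t)"
proof -
  define A where "A = m * t"
  have A0: "0 < A" using t m A_def by simp
  have tA: "t \<le> A" using m A_def by simp
  have L: "mset xs \<in> mparts n" using xs image_mset_partitions by blast
  note ip = idx_props[OF L t A0]
  have "(LEAST k. 0 < k \<and> k mod A = t mod A \<and> k \<notin> set xs) = t + idx t A (mset xs) * A"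
  proof (rule Least_equality)
    show "0 < t + idx t A (mset xs) * A \<and> (t + idx t A (mset xs) * A) mod A = t mod A
        \<and> t + idx t A (mset xs) * A \<notin> set xs"
      using ip(2) t by simp
    fix y assume y: "0 < y \<and> y mod A = t mod A \<and> y \<notin> set xs"
    then obtain i where i: "y = t + i * A" using mod_char[OF t tA] by blast
    then have "t + i * A \<notin># mset xs" using y by simp
    then have "\<not> (Suc i \<le> idx t A (mset xs))" using ip(3)[of "Suc i"] by auto
    then show "t + idx t A (mset xs) * A \<le> y" using i by simp
  qed
  then show ?thesis unfolding mex_def A_def .
qed

lemma p_mex_idx:
  assumes t: "0 < t" and m: "0 < m"
  shows "p_mex (m * t) t n = card {L \<in> mparts n. even (idx t (m * t) L)}"
proof -
  have "{xs \<in> partitions n. mex (m * t) t xs mod (2 * (m * t)) = t mod (2 * (m * t))}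
      = {xs \<in> partitions n. even (idx t (m * t) (mset xs))}"
  proof (rule Collect_cong)
    fix xs
    show "(xs \<in> partitions n \<and> mex (m * t) t xs mod (2 * (m * t)) = t mod (2 * (m * t)))
        = (xs \<in> partitions n \<and> even (idx t (m * t) (mset xs)))"
    proof (cases "xs \<in> partitions n")
      case True
      have "0 < m * t" using t m by simp
      then show ?thesis using mex_idx[OF True t m] even_char[of "m * t" t] True by simp
    qed simp
  qed
  then show ?thesis unfolding p_mex_def using card_filter_partitions by simp
qed

lemma card_filter_sum: "finite S \<Longrightarrow> card {x \<in> S. P x} = (\<Sum>x\<in>S. if P x then 1 else 0)"
proof -
  assume "finite S"
  then have "(\<Sum>x\<in>S. if P x then 1 else 0) = (\<Sum>x\<in>{x \<in> S. P x}. (1::nat))"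
    by (rule sum.inter_filter[symmetric])
  then show ?thesis by simp
qed

lemma sumC:
  assumes t: "0 < t" and A: "0 < A"
  shows "(\<Sum>j\<le>n. card {L \<in> mparts n. \<forall>i<j. t + i * A \<in># L}) = (\<Sum>L\<in>mparts n. idx t A L + 1)"
proof -
  have "(\<Sum>j\<le>n. card {L \<in> mparts n. \<forall>i<j. t + i * A \<in># L})
      = (\<Sum>j\<le>n. \<Sum>L\<in>mparts n. if (\<forall>i<j. t + i * A \<in># L) then 1 else 0)"
    by (rule sum.cong[OF refl], rule card_filter_sum) (rule finite_mparts)
  also have "\<dots> = (\<Sum>L\<in>mparts n. \<Sum>j\<le>n. if (\<forall>i<j. t + i * A \<in># L) then 1 else 0)"
    by (rule sum.swap)
  also have "\<dots> = (\<Sum>L\<in>mparts n. card {j \<in> {..n}. \<forall>i<j. t + i * A \<in># L})"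
    by (rule sum.cong[OF refl], rule card_filter_sum[symmetric]) simp
  also have "\<dots> = (\<Sum>L\<in>mparts n. idx t A L + 1)"
  proof (rule sum.cong[OF refl])
    fix L assume L: "L \<in> mparts n"
    note ip = idx_props[OF L t A]
    have "{j \<in> {..n}. \<forall>i<j. t + i * A \<in># L} = {..idx t A L}"
    proof (intro set_eqI iffI)
      fix j assume "j \<in> {j \<in> {..n}. \<forall>i<j. t + i * A \<in># L}"
      then show "j \<in> {..idx t A L}" using ip(3)[of j] by simp
    next
      fix j assume "j \<in> {..idx t A L}"
      then show "j \<in> {j \<in> {..n}. \<forall>i<j. t + i * A \<in># L}" using ip(3)[of j] ip(1) by simp
    qed
    then show "card {j \<in> {..n}. \<forall>i<j. t + i * A \<in># L} = idx t A L + 1" by simp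
  qed
  finally show ?thesis .
qed


lemma cardC:
  assumes t: "0 < t" and A: "0 < A"
  shows "card {L \<in> mparts n. \<forall>i<j. t + i * A \<in># L} = (if ee t A j \<le> n then pa (n - ee t A j) else 0)"
proof -
  define T where "T = (\<lambda>i. t + i * A) ` {..<j}"
  define D where "D = mset_set T"
  have finT: "finite T" unfolding T_def by simp
  have inj: "inj_on (\<lambda>i. t + i * A) {..<j}" using A by (auto simp: inj_on_def)
  have "sum id T = (\<Sum>i<j. t + i * A)" unfolding T_def using inj by (simp add: sum.reindex)
  then have sD: "sum_mset D = ee t A j" unfolding D_def ee_def using sum_unfold_sum_mset[of id T] by simp
  have cD: "count D x = (if x \<in> T then 1 else 0)" for x by (simp add: D_def finT)
  have "0 \<notin> T" using t unfolding T_def by auto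
  then have "count D 0 = 0" using cD[of 0] by simp
  then have D0: "0 \<notin># D" by (simp add: count_eq_zero_iff)
  have memC: "(\<forall>i<j. t + i * A \<in># L) \<longleftrightarrow> D \<subseteq># L" for L
  proof
    assume h: "\<forall>i<j. t + i * A \<in># L"
    show "D \<subseteq># L" unfolding subseteq_mset_def
    proof
      fix x
      show "count D x \<le> count L x"
      proof (cases "x \<in> T")
        case True
        then have "x \<in># L" using h unfolding T_def by auto
        then show ?thesis using cD[of x] True by simp
      qed (simp add: cD)
    qed
  next
    assume "D \<subseteq># L"
    show "\<forall>i<j. t + i * A \<in># L"
    proof (intro allI impI)
      fix i assume "i < j"
      then have "t + i * A \<in> T" unfolding T_def by auto
      then have "count D (t + i * A) = 1" using cD by simp
      then have "t + i * A \<in># D" by (simp add: count_greater_zero_iff[symmetric])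
      then show "t + i * A \<in># L" using \<open>D \<subseteq># L\<close> by (rule mset_subset_eqD[rotated])
    qed
  qed
  have eqC: "{L \<in> mparts n. \<forall>i<j. t + i * A \<in># L} = {L \<in> mparts n. D \<subseteq># L}"
    using memC by auto
  show ?thesis
  proof (cases "ee t A j \<le> n")
    case True
    have "{L \<in> mparts n. D \<subseteq># L} = (\<lambda>N. D + N) ` mparts (n - ee t A j)"
    proof
      show "{L \<in> mparts n. D \<subseteq># L} \<subseteq> (\<lambda>N. D + N) ` mparts (n - ee t A j)"
      proof
        fix L assume L: "L \<in> {L \<in> mparts n. D \<subseteq># L}"
        then obtain C where C: "L = D + C" using mset_subset_eq_exists_conv by blast
        then have "C \<in> mparts (n - ee t A j)" using L sD unfolding mparts_def by auto
        then show "L \<in> (\<lambda>N. D + N) ` mparts (n - ee t A j)" using C by blast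
      qed
      show "(\<lambda>N. D + N) ` mparts (n - ee t A j) \<subseteq> {L \<in> mparts n. D \<subseteq># L}"
        using True sD D0 unfolding mparts_def by auto
    qed
    moreover have "inj_on (\<lambda>N. D + N) (mparts (n - ee t A j))" by (auto simp: inj_on_def)
    ultimately show ?thesis using True eqC unfolding pa_def by (simp add: card_image)
  next
    case False
    have "{L \<in> mparts n. D \<subseteq># L} = {}"
    proof (rule ccontr)
      assume "{L \<in> mparts n. D \<subseteq># L} \<noteq> {}"
      then obtain L where L: "L \<in> mparts n" "D \<subseteq># L" by blast
      then obtain C where C: "L = D + C" using mset_subset_eq_exists_conv by blast
      then show False using L False sD unfolding mparts_def by auto
    qed
    then show ?thesis using False by (simp only: eqC card.empty if_False)
  qed
qed

lemma pbit:
  assumes t: "0 < t" and m: "0 < m"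
  shows "(of_nat (p_mex (m * t) t n) :: bit)
    = (\<Sum>j\<le>n. if ee t (m * t) j \<le> n then of_nat (pa (n - ee t (m * t) j)) else 0)"
proof -
  define A where "A = m * t"
  have A: "0 < A" using t m A_def by simp
  have "even (\<Sum>L\<in>mparts n. idx t A L + 1) \<longleftrightarrow> even (card {L \<in> mparts n. odd (idx t A L + 1)})"
    by (rule even_sum_iff) (rule finite_mparts)
  also have "{L \<in> mparts n. odd (idx t A L + 1)} = {L \<in> mparts n. even (idx t A L)}" by simp
  also have "card \<dots> = p_mex A t n" using p_mex_idx[OF t m] A_def by simp
  finally have "(of_nat (p_mex A t n) :: bit) = of_nat (\<Sum>L\<in>mparts n. idx t A L + 1)"
    by (simp add: bit_of_nat)
  also have "\<dots> = of_nat (\<Sum>j\<le>n. card {L \<in> mparts n. \<forall>i<j. t + i * A \<in># L})"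
    using sumC[OF t A] by simp
  also have "\<dots> = (\<Sum>j\<le>n. of_nat (card {L \<in> mparts n. \<forall>i<j. t + i * A \<in># L}))"
    by (rule of_nat_sum)
  also have "\<dots> = (\<Sum>j\<le>n. if ee t A j \<le> n then of_nat (pa (n - ee t A j)) else 0)"
    by (rule sum.cong[OF refl]) (simp add: cardC[OF t A])
  finally show ?thesis unfolding A_def .
qed

lemma pent_gap:
  fixes z r :: int
  assumes "z * (3 * z - 1) < r * (3 * r - 1)" "1 \<le> r"
  shows "z * (3 * z - 1) \<le> (r - 1) * (3 * r - 2)"
proof -
  have p: "(z - r) * (3 * z + 3 * r - 1) < 0" using assms(1) by (simp add: algebra_simps)
  have zr: "z < r"
  proof (rule ccontr)
    assume "\<not> z < r"
    then have "0 \<le> z - r" "0 \<le> 3 * z + 3 * r - 1" using assms(2) by auto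
    then have "0 \<le> (z - r) * (3 * z + 3 * r - 1)" by (rule mult_nonneg_nonneg)
    then show False using p by simp
  qed
  have zr2: "-r < z"
  proof (rule ccontr)
    assume "\<not> -r < z"
    then have "z - r < 0" "3 * z + 3 * r - 1 < 0" using assms(2) by auto
    then have "0 < (z - r) * (3 * z + 3 * r - 1)" by (rule mult_neg_neg)
    then show False using p by simp
  qed
  have "0 \<le> z + r - 1" "3 * z - 3 * r + 2 \<le> 0" using zr zr2 by auto
  then have "(z + r - 1) * (3 * z - 3 * r + 2) \<le> 0" by (rule mult_nonneg_nonpos)
  then show ?thesis by (simp add: algebra_simps)
qed

lemma ee_pos: "0 < t \<Longrightarrow> j \<le> ee t A j"
proof (induction j)
  case (Suc j) then show ?case unfolding ee_def by simp
qed simp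

lemma ee_formula: "2 * int (ee t (m * t) j) = (int m * int j ^ 2 - (int m - 2) * int j) * int t"
proof (induction j)
  case 0 then show ?case unfolding ee_def by simp
next
  case (Suc j)
  have "ee t (m * t) (Suc j) = ee t (m * t) j + (t + j * (m * t))" unfolding ee_def by simp
  then have "2 * int (ee t (m * t) (Suc j)) = 2 * int (ee t (m * t) j) + 2 * (int t + int j * (int m * int t))"
    by simp
  also have "\<dots> = (int m * int (Suc j) ^ 2 - (int m - 2) * int (Suc j)) * int t"
    unfolding Suc.IH by (simp add: algebra_simps power2_eq_square)
  finally show ?case .
qed

lemma main_sum:
  assumes t: "0 < t" and m: "0 < m" and ne: "\<And>j. ee t (m * t) j \<noteq> N"
  shows "(\<Sum>g\<le>N. if gp g then (of_nat (p_mex (m * t) t (N - g)) :: bit) else 0) = 0"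
proof -
  define A where "A = m * t"
  define H where "H g j = (if gp g \<and> g + ee t A j \<le> N then (of_nat (pa (N - ee t A j - g)) :: bit) else 0)" for g j
  have step1: "(if gp g then (of_nat (p_mex A t (N - g)) :: bit) else 0) = (\<Sum>j\<le>N. H g j)" if g: "g \<le> N" for g
  proof (cases "gp g")
    case True
    have "(of_nat (p_mex A t (N - g)) :: bit)
        = (\<Sum>j\<le>N - g. if ee t A j \<le> N - g then of_nat (pa (N - g - ee t A j)) else 0)"
      unfolding A_def by (rule pbit[OF t m])
    also have "\<dots> = (\<Sum>j\<le>N. if ee t A j \<le> N - g then (of_nat (pa (N - g - ee t A j)) :: bit) else 0)"
    proof (rule sum.mono_neutral_left)
      show "\<forall>j\<in>{..N} - {..N - g}. (if ee t A j \<le> N - g then (of_nat (pa (N - g - ee t A j)) :: bit) else 0) = 0"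
      proof
        fix j assume "j \<in> {..N} - {..N - g}"
        then have "N - g < j" by auto
        moreover have "j \<le> ee t A j" by (rule ee_pos[OF t])
        ultimately show "(if ee t A j \<le> N - g then (of_nat (pa (N - g - ee t A j)) :: bit) else 0) = 0" by simp
      qed
    qed auto
    also have "\<dots> = (\<Sum>j\<le>N. H g j)"
      by (rule sum.cong[OF refl]) (use g True in \<open>auto simp: H_def add.commute\<close>)
    finally show ?thesis using True by simp
  next
    case False
    then show ?thesis by (simp add: H_def)
  qed
  have step2: "(\<Sum>g\<le>N. H g j) = 0" for j
  proof (cases "ee t A j \<le> N")
    case True
    have "(\<Sum>g\<le>N. H g j) = (\<Sum>g\<le>N - ee t A j. H g j)"
    proof (rule sum.mono_neutral_right)
      show "\<forall>g\<in>{..N} - {..N - ee t A j}. H g j = 0" by (auto simp: H_def)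
    qed auto
    also have "\<dots> = (\<Sum>g\<le>N - ee t A j. if gp g then (of_nat (pa (N - ee t A j - g)) :: bit) else 0)"
      by (rule sum.cong[OF refl]) (use True in \<open>auto simp: H_def\<close>)
    also have "\<dots> = (if N - ee t A j = 0 then 1 else 0)" by (rule euler2)
    also have "\<dots> = 0" using True ne[of j] A_def by simp
    finally show ?thesis .
  next
    case False
    then show ?thesis by (auto simp: H_def intro!: sum.neutral)
  qed
  have "(\<Sum>g\<le>N. if gp g then (of_nat (p_mex A t (N - g)) :: bit) else 0) = (\<Sum>g\<le>N. \<Sum>j\<le>N. H g j)"
    by (rule sum.cong[OF refl]) (simp add: step1)
  also have "\<dots> = (\<Sum>j\<le>N. \<Sum>g\<le>N. H g j)" by (rule sum.swap)
  also have "\<dots> = 0" by (simp add: step2)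
  finally show ?thesis unfolding A_def .
qed

lemma p_zero: "0 < t \<Longrightarrow> 0 < m \<Longrightarrow> (of_nat (p_mex (m * t) t 0) :: bit) = 1"
  using pbit[of t m 0] by (simp add: ee_def pa0)

theorem lemma2p3:
  fixes t m r :: nat
  assumes "0 < t" and "0 < m" and "2 \<le> r"
    and "\<forall>k::nat. 0 < k \<longrightarrow>
           int r * (3 * int r - 1) \<noteq> (int m * int k ^ 2 - (int m - 2) * int k) * int t"
  shows "\<exists>n::nat. 2 * r - 1 \<le> n \<and> 2 * n \<le> r * (3 * r - 1) \<and> odd (p_mex (m * t) t n)"
proof -
  note t = assms(1) and m = assms(2) and r = assms(3) and hyp = assms(4)
  have ev: "even (r * (3 * r - 1))" by (cases "even r") auto
  define N where "N = r * (3 * r - 1) div 2"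
  have N2: "2 * N = r * (3 * r - 1)" using ev N_def by simp
  have N2i: "2 * int N = int r * (3 * int r - 1)"
  proof -
    have "int (2 * N) = int (r * (3 * r - 1))" using N2 by simp
    then show ?thesis using r by (simp add: of_nat_diff)
  qed
  have "0 < r * (3 * r - 1)" using r by simp
  then have Npos: "0 < N" using N2 by linarith
  have ne: "ee t (m * t) j \<noteq> N" for j
  proof
    assume e: "ee t (m * t) j = N"
    show False
    proof (cases "j = 0")
      case True then show False using e Npos by (simp add: ee_def)
    next
      case False
      have "2 * int (ee t (m * t) j) = (int m * int j ^ 2 - (int m - 2) * int j) * int t"
        by (rule ee_formula)
      then show False using hyp False e N2i by auto
    qed
  qed
  have S: "(\<Sum>g\<le>N. if gp g then (of_nat (p_mex (m * t) t (N - g)) :: bit) else 0) = 0"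
    by (rule main_sum[OF t m ne])
  have gpN: "gp N" unfolding gp_def using N2i by blast
  define x where "x = (\<Sum>g<N. if gp g then (of_nat (p_mex (m * t) t (N - g)) :: bit) else 0)"
  define a where "a = (if gp N then (of_nat (p_mex (m * t) t (N - N)) :: bit) else 0)"
  have e1: "(\<Sum>g\<le>N. if gp g then (of_nat (p_mex (m * t) t (N - g)) :: bit) else 0) = a + x"
    unfolding a_def x_def lessThan_Suc_atMost[symmetric] by (subst sum.lessThan_Suc) (rule add.commute)
  have a1: "a = 1" unfolding a_def using gpN p_zero[OF t m] by simp
  have "a + x = 0" using e1 S by simp
  then have "1 + x = 0" using a1 by simp
  then have "x \<noteq> 0" by auto
  then obtain g where "g \<in> {..<N}" "(if gp g then (of_nat (p_mex (m * t) t (N - g)) :: bit) else 0) \<noteq> 0"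
    unfolding x_def by (blast dest: sum.not_neutral_contains_not_neutral)
  then have g: "g < N" "gp g" "(of_nat (p_mex (m * t) t (N - g)) :: bit) \<noteq> 0"
    by (auto split: if_splits)
  have odd: "odd (p_mex (m * t) t (N - g))" using g(3) bit_of_nat[of "p_mex (m * t) t (N - g)"]
    by (auto split: if_splits)
  obtain z where z: "2 * int g = z * (3 * z - 1)" using g(2) unfolding gp_def by blast
  have "z * (3 * z - 1) < int r * (3 * int r - 1)" using z N2i g(1) by linarith
  then have "z * (3 * z - 1) \<le> (int r - 1) * (3 * int r - 2)" using r by (intro pent_gap) auto
  then have "2 * int g \<le> 2 * int N - 2 * (2 * int r - 1)" using z N2i by (simp add: algebra_simps)
  then have i1: "2 * int r - 1 \<le> int N - int g" by presburger
  have "int (2 * r - 1) = 2 * int r - 1" using r by simp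
  moreover have "int (N - g) = int N - int g" using g(1) by simp
  ultimately have "int (2 * r - 1) \<le> int (N - g)" using i1 by simp
  then have "2 * r - 1 \<le> N - g" by simp
  moreover have "2 * (N - g) \<le> r * (3 * r - 1)" using N2 by simp
  ultimately show ?thesis using odd by blast
qed

end
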